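(* Under the standing assumptions below, $W$ is a Foster–Lyapunov function: for every $\eta\in\Theta$, $$LW(\eta)\le\mathbf b\langle h\rangle-\tfrac12W(\eta),$$ where $\langle h\rangle=\int_{\mathbb R^d}h(x)dx$.
   Context: Fix $d\in\mathbb N$, $\varepsilon>0$, $G(x)=(1+|x|)^{-d-\varepsilon}$. $\Gamma$ is the set of locally finite subsets of $\mathbb R^d$; $\Gamma_G=\{\gamma\in\Gamma:\sum_{x\in\gamma}G(x)<\infty\}$. Let $b:\mathbb R^d\times\Gamma_G\to[0,\infty)$ be measurable with $\mathbf b:=\sup_{x,\eta}b(x,\eta)<\infty$. The operator $L$ acts on functions $F$ on configurations by $$LF(\eta)=\sum_{x\in\eta}\bigl(F(\eta\setminus\{x\})-F(\eta)\bigr)+\int_{\mathbb R^d}b(x,\eta)\bigl(F(\eta\cup\{x\})-F(\eta)\bigr)dx.$$ Let $K:(0,\infty)\to(0,\infty)$ be non-increasing with $\lim_{q\to0+}K(q)=\infty$ and $\int_r^\infty K(q)q^{d-1}dq<\infty$ for every $r>0$. Let $\phi,h:\mathbb R^d\to(0,\infty)$ be measurable, separated from $0$ on every compact set, with $C_1:=\sup_{x}\int_{\mathbb R^d}\phi(y)K(|x-y|)dy<\infty$ and $2C_1\mathbf b\,\phi(x)\le h(x)\le G(x)$ for all $x$. Set $\psi(x,y)=\phi(x)\phi(y)K(|x-y|)$ ($x\ne y$), $V(\eta)=\sum_{\{x,y\}\subset\eta}\psi(x,y)$ (sum over unordered pairs of distinct points), $\langle h,\eta\rangle=\sum_{x\in\eta}h(x)$,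 $W(\eta)=\langle h,\eta\rangle+V(\eta)\in[0,\infty]$, and $\Theta=\{\eta\in\Gamma_G:V(\eta)<\infty\}$. *)

theory Defs
  imports "HOL-Analysis.Analysis"
begin

text \<open>Configurations in R^d are sets of points of a Euclidean space 'a (d = DIM('a)).\<close>

definition locfin :: "'a::euclidean_space set \<Rightarrow> bool" where
  "locfin \<eta> \<longleftrightarrow> (\<forall>B. bounded B \<longrightarrow> finite (\<eta> \<inter> B))"

definition Gfun :: "real \<Rightarrow> 'a::euclidean_space \<Rightarrow> real" where
  "Gfun \<epsilon> x = (1 + norm x) powr (- (real DIM('a) + \<epsilon>))"

definition GammaG :: "real \<Rightarrow> 'a::euclidean_space set set" where
  "GammaG \<epsilon> = {\<eta>. locfin \<eta> \<and> Gfun \<epsilon> summable_on \<eta>}"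

definition offdiag :: "'a set \<Rightarrow> ('a \<times> 'a) set" where
  "offdiag \<eta> = {(x, y). x \<in> \<eta> \<and> y \<in> \<eta> \<and> x \<noteq> y}"

definition psi :: "('a::euclidean_space \<Rightarrow> real) \<Rightarrow> (real \<Rightarrow> real) \<Rightarrow> 'a \<Rightarrow> 'a \<Rightarrow> real" where
  "psi \<phi> K x y = \<phi> x * \<phi> y * K (dist x y)"

text \<open>Sum over unordered pairs of distinct points = half the sum over ordered pairs (psi symmetric).\<close>
definition Vfun :: "('a::euclidean_space \<Rightarrow> real) \<Rightarrow> (real \<Rightarrow> real) \<Rightarrow> 'a set \<Rightarrow> real" where
  "Vfun \<phi> K \<eta> = (1/2) * (\<Sum>\<^sub>\<infinity>(x, y)\<in>offdiag \<eta>. psi \<phi> K x y)"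

definition Wfun :: "('a::euclidean_space \<Rightarrow> real) \<Rightarrow> ('a \<Rightarrow> real) \<Rightarrow> (real \<Rightarrow> real) \<Rightarrow> 'a set \<Rightarrow> real" where
  "Wfun h \<phi> K \<eta> = (\<Sum>\<^sub>\<infinity>x\<in>\<eta>. h x) + Vfun \<phi> K \<eta>"

definition Theta :: "real \<Rightarrow> ('a::euclidean_space \<Rightarrow> real) \<Rightarrow> (real \<Rightarrow> real) \<Rightarrow> 'a set set" where
  "Theta \<epsilon> \<phi> K = {\<eta> \<in> GammaG \<epsilon>. (\<lambda>(x, y). psi \<phi> K x y) summable_on offdiag \<eta>}"

definition Lgen :: "('a::euclidean_space \<Rightarrow> 'a set \<Rightarrow> real) \<Rightarrow> ('a set \<Rightarrow> real) \<Rightarrow> 'a set \<Rightarrow> real" where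
  "Lgen b F \<eta> = (\<Sum>\<^sub>\<infinity>x\<in>\<eta>. F (\<eta> - {x}) - F \<eta>)
      + (\<integral>x. b x \<eta> * (F (insert x \<eta>) - F \<eta>) \<partial>lborel)"

definition bsup :: "('a::euclidean_space \<Rightarrow> 'a set \<Rightarrow> real) \<Rightarrow> real \<Rightarrow> real" where
  "bsup b \<epsilon> = Sup {b x \<eta> | x \<eta>. \<eta> \<in> GammaG \<epsilon>}"

definition C1 :: "('a::euclidean_space \<Rightarrow> real) \<Rightarrow> (real \<Rightarrow> real) \<Rightarrow> ennreal" where
  "C1 \<phi> K = (SUP x. \<integral>\<^sup>+ y. ennreal (\<phi> y * K (dist x y)) \<partial>lborel)"

end

theory Submission
  imports Defs
begin


lemma G_bound_pt:
  fixes x :: "'a::euclidean_space" and \<epsilon> :: real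
  assumes eps: "\<epsilon> > 0"
  shows "\<exists>k::nat. Gfun \<epsilon> x \<le> (2^k) powr (- (real DIM('a) + \<epsilon>)) \<and> x \<in> cbox (- (2^(k+1)) *\<^sub>R One) ((2^(k+1)) *\<^sub>R One)"
proof -
  define t where "t = 1 + norm x"
  have t1: "t \<ge> 1" by (simp add: t_def)
  define k where "k = nat \<lfloor>log 2 t\<rfloor>"
  have lg: "log 2 t \<ge> 0" using t1 by simp
  have k1: "real k \<le> log 2 t" using lg by (simp add: k_def)
  have k2: "log 2 t < real k + 1" using lg by (simp add: k_def)
  have "(2::real)^k = 2 powr (real k)" by (simp add: powr_realpow)
  also have "\<dots> \<le> 2 powr (log 2 t)" using k1 by simp
  also have "\<dots> = t" using t1 by simp
  finally have a: "(2::real)^k \<le> t" .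
  have "t = 2 powr (log 2 t)" using t1 by simp
  also have "\<dots> < 2 powr (real k + 1)" using k2 by simp
  also have "\<dots> = 2^(k+1)" by (simp add: powr_realpow[symmetric] powr_add)
  finally have b: "t < 2^(k+1)" .
  have "Gfun \<epsilon> x \<le> (2^k) powr (- (real DIM('a) + \<epsilon>))"
    unfolding Gfun_def t_def[symmetric]
    by (rule powr_mono2') (use a eps in auto)
  moreover have "x \<in> cbox (- (2^(k+1)) *\<^sub>R One) ((2^(k+1)) *\<^sub>R One)"
  proof -
    have "norm x \<le> 2^(k+1)" using b t_def by simp
    then have "\<And>i. i\<in>Basis \<Longrightarrow> \<bar>x\<bullet>i\<bar> \<le> 2^(k+1)" using Basis_le_norm order_trans by blast
    then show ?thesis
      by (force simp: mem_box abs_le_iff)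
  qed
  ultimately show ?thesis by blast
qed

lemma G_integrable:
  assumes eps: "\<epsilon> > 0"
  shows "integrable lborel (Gfun \<epsilon> :: 'a::euclidean_space \<Rightarrow> real)"
proof (rule integrableI_bounded)
  show "Gfun \<epsilon> \<in> borel_measurable (lborel :: 'a measure)"
    unfolding Gfun_def by measurable
  define d where "d = real DIM('a)"
  define c :: "nat \<Rightarrow> real" where "c k = (2^k) powr (- (d + \<epsilon>))" for k
  define B :: "nat \<Rightarrow> 'a set" where "B k = cbox (- (2^(k+1)) *\<^sub>R One) ((2^(k+1)) *\<^sub>R One)" for k
  have cnn: "c k \<ge> 0" for k by (simp add: c_def)
  have pt: "ennreal (norm (Gfun \<epsilon> x)) \<le> (\<Sum>k. ennreal (c k) * indicator (B k) x)" for x :: 'a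
  proof -
    obtain k where k: "Gfun \<epsilon> x \<le> c k" "x \<in> B k"
      using G_bound_pt[OF eps, of x] unfolding c_def B_def d_def by blast
    have "norm (Gfun \<epsilon> x) = Gfun \<epsilon> x" by (simp add: Gfun_def)
    then have "ennreal (norm (Gfun \<epsilon> x)) \<le> ennreal (c k) * indicator (B k) x"
      using k by simp
    also have "\<dots> \<le> (\<Sum>k. ennreal (c k) * indicator (B k) x)"
    proof -
      have "(\<Sum>j\<in>{k}. ennreal (c j) * indicator (B j) x) \<le> (\<Sum>k. ennreal (c k) * indicator (B k) x)"
        by (rule sum_le_suminf[OF summableI]) auto
      then show ?thesis by (metis add.right_neutral empty_iff finite.emptyI sum.empty sum.insert)
    qed
    finally show ?thesis .
  qed
  have meas: "emeasure lborel (B k) = ennreal ((2^(k+2))^DIM('a))" for k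
  proof -
    have "emeasure lborel (B k) = ennreal (4^DIM('a) * (2^k)^DIM('a))"
      unfolding B_def emeasure_lborel_cbox_eq
      by (auto simp: inner_diff_left algebra_simps intro!: prod.cong)
    also have "\<dots> = ennreal ((2^(k+2))^DIM('a))" by (simp add: power_mult_distrib)
    finally show ?thesis .
  qed
  have ck: "c k * (2^(k+2))^DIM('a) = 4^DIM('a) * (2 powr (-\<epsilon>))^k" for k
  proof -
    have "c k = (2 powr (- d)) ^ k * (2 powr (-\<epsilon>))^k"
      unfolding c_def by (simp add: powr_realpow[symmetric] powr_powr powr_add[symmetric] powr_power algebra_simps)
    moreover have "(2::real)^(k+2) = 4 * 2^k" by simp
    moreover have "(2 powr (- d)) ^ k * (2^k)^DIM('a) = (1::real)"
    proof -
      have e1: "2 powr (-d) = inverse ((2::real)^DIM('a))" by (simp add: d_def powr_minus powr_realpow)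
      have e2: "((2::real)^k)^DIM('a) = (2^DIM('a))^k" by (simp add: power_mult[symmetric] mult.commute)
      show ?thesis by (simp add: e1 e2 power_mult_distrib[symmetric])
    qed
    ultimately show ?thesis by (simp add: power_mult_distrib)
  qed
  have summ: "summable (\<lambda>k. 4^DIM('a) * (2 powr (-\<epsilon>))^k :: real)"
  proof -
    have "(2::real) powr -\<epsilon> < 2 powr 0" by (rule powr_less_mono) (use eps in auto)
    then show ?thesis by (intro summable_mult summable_geometric) auto
  qed
  have "(\<integral>\<^sup>+x. ennreal (norm (Gfun \<epsilon> (x::'a))) \<partial>lborel) \<le> (\<integral>\<^sup>+x. (\<Sum>k. ennreal (c k) * indicator (B k) x) \<partial>lborel)"
    by (rule nn_integral_mono) (rule pt)
  also have "\<dots> = (\<Sum>k. \<integral>\<^sup>+x. ennreal (c k) * indicator (B k) x \<partial>lborel)"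
    by (rule nn_integral_suminf) (simp add: B_def)
  also have "\<dots> = (\<Sum>k. ennreal (4^DIM('a) * (2 powr (-\<epsilon>))^k))"
  proof (rule suminf_cong)
    fix k
    have "(\<integral>\<^sup>+x. ennreal (c k) * indicator (B k) x \<partial>lborel) = ennreal (c k) * emeasure lborel (B k)"
      by (rule nn_integral_cmult_indicator) (simp add: B_def)
    also have "\<dots> = ennreal (c k * (2^(k+2))^DIM('a))"
      by (simp only: meas ennreal_mult[symmetric] cnn) (simp add: ennreal_mult cnn)
    finally show "(\<integral>\<^sup>+x. ennreal (c k) * indicator (B k) x \<partial>lborel) = ennreal (4^DIM('a) * (2 powr (-\<epsilon>))^k)"
      by (simp only: ck)
  qed
  also have "\<dots> = ennreal (\<Sum>k. 4^DIM('a) * (2 powr (-\<epsilon>))^k)"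
    by (rule suminf_ennreal2[OF _ summ]) simp
  also have "\<dots> < \<infinity>" by simp
  finally show "(\<integral>\<^sup>+x. ennreal (norm (Gfun \<epsilon> (x::'a))) \<partial>lborel) < \<infinity>" .
qed




lemma psi_sym: "psi \<phi> K x y = psi \<phi> K y x"
  unfolding psi_def by (simp add: dist_commute mult.commute)

lemma offdiag_Sigma: "offdiag A = Sigma A (\<lambda>x. A - {x})"
  unfolding offdiag_def by auto

lemma offdiag_insert:
  assumes "x \<notin> A"
  shows "offdiag (insert x A) = offdiag A \<union> (Pair x ` A) \<union> ((\<lambda>y. (y, x)) ` A)"
  using assms unfolding offdiag_def by auto

lemma psi_summable_insert:
  fixes A :: "'a::euclidean_space set"
  assumes x: "x \<notin> A" and ps: "(\<lambda>(x,y). psi \<phi> K x y) summable_on offdiag A"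
    and px: "(\<lambda>y. psi \<phi> K x y) summable_on A"
  shows "(\<lambda>(x,y). psi \<phi> K x y) summable_on offdiag (insert x A)"
proof -
  have i1: "inj_on (Pair x) A" by (auto simp: inj_on_def)
  have i2: "inj_on (\<lambda>y. (y, x)) A" by (auto simp: inj_on_def)
  have s1: "(\<lambda>(x,y). psi \<phi> K x y) summable_on (Pair x ` A)"
    by (subst summable_on_reindex[OF i1]) (simp add: o_def px)
  have s2: "(\<lambda>(x,y). psi \<phi> K x y) summable_on ((\<lambda>y. (y, x)) ` A)"
    by (subst summable_on_reindex[OF i2]) (simp add: o_def psi_sym[of _ _ _ x] px)
  show ?thesis unfolding offdiag_insert[OF x]
    by (intro summable_on_union ps s1 s2)
qed

lemma W_remove:
  fixes A :: "'a::euclidean_space set"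
  assumes hs: "h summable_on A" and ps: "(\<lambda>(x,y). psi \<phi> K x y) summable_on offdiag A" and x: "x \<in> A"
  shows "Wfun h \<phi> K A = Wfun h \<phi> K (A - {x}) + h x + infsum (\<lambda>y. psi \<phi> K x y) (A - {x})"
proof -
  define f where "f = (\<lambda>(x,y). psi \<phi> K x y)"
  define A' where "A' = A - {x}"
  have AA: "A = insert x A'" "x \<notin> A'" using x by (auto simp: A'_def)
  have "infsum h A = h x + infsum h A'"
    unfolding AA(1) by (rule infsum_insert) (use hs AA in \<open>auto intro: summable_on_subset_banach\<close>)
  moreover
  have i1: "inj_on (Pair x) A'" by (auto simp: inj_on_def)
  have i2: "inj_on (\<lambda>y. (y, x)) A'" by (auto simp: inj_on_def)
  have od: "offdiag A = offdiag A' \<union> (Pair x ` A') \<union> ((\<lambda>y. (y, x)) ` A')"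
    unfolding AA(1) by (rule offdiag_insert[OF AA(2)])
  have sa: "f summable_on offdiag A" using ps by (simp add: f_def)
  have s0: "f summable_on offdiag A'" by (rule summable_on_subset_banach[OF sa]) (auto simp: od)
  have s1: "f summable_on Pair x ` A'" by (rule summable_on_subset_banach[OF sa]) (auto simp: od)
  have s2: "f summable_on (\<lambda>y. (y, x)) ` A'" by (rule summable_on_subset_banach[OF sa]) (auto simp: od)
  have e1: "infsum f (Pair x ` A') = infsum (\<lambda>y. psi \<phi> K x y) A'"
    by (subst infsum_reindex[OF i1]) (simp add: o_def f_def)
  have e2: "infsum f ((\<lambda>y. (y, x)) ` A') = infsum (\<lambda>y. psi \<phi> K x y) A'"
    by (subst infsum_reindex[OF i2]) (simp add: o_def f_def psi_sym[of _ _ _ x])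
  have "infsum f (offdiag A) = infsum f (offdiag A') + infsum f (Pair x ` A') + infsum f ((\<lambda>y. (y, x)) ` A')"
    unfolding od
    apply (subst infsum_Un_disjoint)
       apply (rule summable_on_union[OF s0 s1])
      apply (rule s2)
     apply (use AA(2) in \<open>auto simp: offdiag_def\<close>)[1]
    apply (subst infsum_Un_disjoint[OF s0 s1])
     apply (use AA(2) in \<open>auto simp: offdiag_def\<close>)
    done
  ultimately show ?thesis
    unfolding Wfun_def Vfun_def f_def[symmetric] A'_def[symmetric] using e1 e2 by simp
qed




lemma nn_count_infsum:
  fixes f :: "'b \<Rightarrow> real"
  assumes nn: "\<And>x. x\<in>A \<Longrightarrow> f x \<ge> 0" and s: "f summable_on A"
  shows "(\<integral>\<^sup>+x. ennreal (f x) \<partial>count_space A) = ennreal (infsum f A)"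
proof -
  have "(\<lambda>x. norm (f x)) summable_on A"
    using s by (rule summable_on_cong[THEN iffD1, rotated]) (use nn in auto)
  then have a: "Infinite_Set_Sum.abs_summable_on f A"
    using abs_summable_equivalent by blast
  have "(\<integral>\<^sup>+x. ennreal (f x) \<partial>count_space A) = ennreal (infsetsum f A)"
    by (rule nn_integral_conv_infsetsum[OF a nn])
  also have "infsetsum f A = infsum f A" by (rule infsetsum_infsum[OF a])
  finally show ?thesis .
qed

lemma nn_count_summable:
  fixes f :: "'b \<Rightarrow> real"
  assumes nn: "\<And>x. x\<in>A \<Longrightarrow> f x \<ge> 0" and fin: "(\<integral>\<^sup>+x. ennreal (f x) \<partial>count_space A) < \<infinity>"
  shows "f summable_on A"
proof -
  have "integrable (count_space A) f"
  proof (rule integrableI_bounded)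
    show "f \<in> borel_measurable (count_space A)" by simp
    have "(\<integral>\<^sup>+x. ennreal (norm (f x)) \<partial>count_space A) = (\<integral>\<^sup>+x. ennreal (f x) \<partial>count_space A)"
      by (rule nn_integral_cong) (use nn in auto)
    then show "(\<integral>\<^sup>+x. ennreal (norm (f x)) \<partial>count_space A) < \<infinity>" using fin by simp
  qed
  then have "Infinite_Set_Sum.abs_summable_on f A" by (simp add: Infinite_Set_Sum.abs_summable_on_def)
  then have "(\<lambda>x. norm (f x)) summable_on A"
    using abs_summable_equivalent by blast
  then show ?thesis
    by (rule summable_on_cong[THEN iffD1, rotated]) (use nn in auto)
qed

lemma locfin_countable:
  fixes \<eta> :: "'a::euclidean_space set"
  assumes "locfin \<eta>" shows "countable \<eta>"
proof -
  have "\<eta> = (\<Union>n::nat. \<eta> \<inter> cball 0 (real n))"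
    by (auto intro: real_arch_simple)
  moreover have "countable (\<eta> \<inter> cball 0 (real n))" for n
    using assms unfolding locfin_def by (intro countable_finite) auto
  ultimately show ?thesis by (metis countable_UN[of UNIV] countableI_type)
qed




lemma K_dist_meas:
  fixes y :: "'a::euclidean_space" and K :: "real \<Rightarrow> real"
  assumes K_mono: "\<And>p q. 0 < p \<Longrightarrow> p \<le> q \<Longrightarrow> K q \<le> K p"
  shows "(\<lambda>x. K (dist x y)) \<in> borel_measurable lborel"
proof -
  define K0 where "K0 q = (if q \<le> 0 then K 0 else K q)" for q
  have "(\<lambda>q. - K0 q) \<in> borel_measurable borel"
  proof (rule borel_measurable_piecewise_mono[of "{{..0}, {0<..}}"])
    fix c assume "c \<in> {{..0::real}, {0<..}}"
    then show "mono_on c (\<lambda>q. - K0 q)"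
      by (auto simp: mono_on_def K0_def intro: K_mono)
  qed auto
  then have "K0 \<in> borel_measurable borel"
    by (metis borel_measurable_uminus_eq)
  then have "(\<lambda>x. K0 (dist x y)) \<in> borel_measurable lborel"
    by (intro measurable_compose[OF _ \<open>K0 \<in> _\<close>]) (auto intro: borel_measurable_continuous_onI continuous_intros)
  moreover have "K0 (dist x y) = K (dist x y)" for x
    by (auto simp: K0_def)
  ultimately show ?thesis by simp
qed




theorem lemma4p10:
  fixes \<epsilon> :: real
    and b :: "'a::euclidean_space \<Rightarrow> 'a set \<Rightarrow> real"
    and K :: "real \<Rightarrow> real"
    and \<phi> h :: "'a \<Rightarrow> real"
    and \<eta> :: "'a set"
  assumes eps: "\<epsilon> > 0"
    and b_meas: "\<And>\<xi>. \<xi> \<in> GammaG \<epsilon> \<Longrightarrow> (\<lambda>x. b x \<xi>) \<in> borel_measurable lborel"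
    and b_nonneg: "\<And>x \<xi>. \<xi> \<in> GammaG \<epsilon> \<Longrightarrow> 0 \<le> b x \<xi>"
    and b_bdd: "bdd_above {b x \<xi> | x \<xi>. \<xi> \<in> GammaG \<epsilon>}"
    and K_pos: "\<And>q. q > 0 \<Longrightarrow> K q > 0"
    and K_mono: "\<And>p q. 0 < p \<Longrightarrow> p \<le> q \<Longrightarrow> K q \<le> K p"
    and K_lim: "filterlim K at_top (at_right 0)"
    and K_int: "\<And>r. r > 0 \<Longrightarrow> set_integrable lborel {r..} (\<lambda>q. K q * q ^ (DIM('a) - 1))"
    and phi_meas: "\<phi> \<in> borel_measurable lborel"
    and h_meas: "h \<in> borel_measurable lborel"
    and phi_pos: "\<And>x. \<phi> x > 0"
    and h_pos: "\<And>x. h x > 0"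
    and phi_sep: "\<And>C. compact C \<Longrightarrow> \<exists>c>0. \<forall>x\<in>C. c \<le> \<phi> x"
    and h_sep: "\<And>C. compact C \<Longrightarrow> \<exists>c>0. \<forall>x\<in>C. c \<le> h x"
    and C1_fin: "C1 \<phi> K < \<infinity>"
    and h_lower: "\<And>x. 2 * enn2real (C1 \<phi> K) * bsup b \<epsilon> * \<phi> x \<le> h x"
    and h_upper: "\<And>x. h x \<le> Gfun \<epsilon> x"
    and eta: "\<eta> \<in> Theta \<epsilon> \<phi> K"
  shows "Lgen b (Wfun h \<phi> K) \<eta> \<le> bsup b \<epsilon> * (\<integral>x. h x \<partial>lborel) - 1/2 * Wfun h \<phi> K \<eta>"
proof -
  define \<psi> where "\<psi> = psi \<phi> K"
  define f2 where "f2 = (\<lambda>(x,y). psi \<phi> K x y)"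
  define Bs where "Bs = bsup b \<epsilon>"
  define W where "W = Wfun h \<phi> K"
  define Hs where "Hs = infsum h \<eta>"
  define V' where "V' = Vfun \<phi> K \<eta>"
  have GG: "\<eta> \<in> GammaG \<epsilon>" and ps: "f2 summable_on offdiag \<eta>"
    using eta by (auto simp: Theta_def f2_def)
  have lf: "locfin \<eta>" and Gs: "Gfun \<epsilon> summable_on \<eta>" using GG by (auto simp: GammaG_def)
  have hs: "h summable_on \<eta>"
    by (rule summable_on_comparison_test[OF Gs]) (use h_upper h_pos less_imp_le in auto)
  have cnt: "countable \<eta>" by (rule locfin_countable[OF lf])
  have psi_nn: "\<And>x y. x \<noteq> y \<Longrightarrow> 0 \<le> psi \<phi> K x y"
    unfolding psi_def using phi_pos K_pos by (simp add: less_imp_le)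
  have f2_nn: "\<And>p. p \<in> offdiag \<eta> \<Longrightarrow> 0 \<le> f2 p"
    by (auto simp: f2_def offdiag_def psi_nn)
  have hnn: "\<And>x. 0 \<le> h x" using h_pos less_imp_le by blast
  have Hs_nn: "0 \<le> Hs" unfolding Hs_def by (rule infsum_nonneg) (rule hnn)
  have V_nn: "0 \<le> V'" unfolding V'_def Vfun_def f2_def[symmetric]
    using infsum_nonneg[of "offdiag \<eta>" f2] f2_nn by simp
  have Weq: "W \<eta> = Hs + V'" by (simp add: W_def Wfun_def Hs_def V'_def)
  have emp: "{} \<in> GammaG \<epsilon>" by (simp add: GammaG_def locfin_def)
  have ble: "\<And>x \<xi>. \<xi> \<in> GammaG \<epsilon> \<Longrightarrow> b x \<xi> \<le> Bs"
    unfolding Bs_def bsup_def by (rule cSup_upper[OF _ b_bdd]) blast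
  have Bs_nn: "0 \<le> Bs" using b_nonneg[OF emp] ble[OF emp] order_trans by blast
  define g where "g x = infsum (\<lambda>y. psi \<phi> K x y) (\<eta> - {x})" for x
  have rm: "W (\<eta> - {x}) - W \<eta> = - (h x + g x)" if "x \<in> \<eta>" for x
    using W_remove[OF hs ps[unfolded f2_def] that] by (simp add: W_def g_def)
  have gs: "g summable_on \<eta>" and gi: "infsum g \<eta> = infsum f2 (offdiag \<eta>)"
    using summable_on_Sigma_banach[of "\<lambda>x y. psi \<phi> K x y" \<eta> "\<lambda>x. \<eta> - {x}"]
      infsum_Sigma'_banach[of "\<lambda>x y. psi \<phi> K x y" \<eta> "\<lambda>x. \<eta> - {x}"]
      ps by (simp_all add: g_def[abs_def] f2_def offdiag_Sigma)
  have P1: "(\<Sum>\<^sub>\<infinity>x\<in>\<eta>. W (\<eta> - {x}) - W \<eta>) = - (Hs + 2 * V')"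
  proof -
    have "(\<Sum>\<^sub>\<infinity>x\<in>\<eta>. W (\<eta> - {x}) - W \<eta>) = (\<Sum>\<^sub>\<infinity>x\<in>\<eta>. - (h x + g x))"
      by (rule infsum_cong) (rule rm)
    also have "\<dots> = - (Hs + infsum g \<eta>)"
      by (simp only: infsum_uminus infsum_add[OF hs gs] Hs_def)
    also have "infsum g \<eta> = 2 * V'" by (simp add: gi V'_def Vfun_def f2_def)
    finally show ?thesis .
  qed
  define F where "F x = b x \<eta> * (W (insert x \<eta>) - W \<eta>)" for x
  have P2: "(\<integral>x. F x \<partial>lborel) \<le> Bs * (\<integral>x. h x \<partial>lborel) + Hs / 2"
  proof (cases "integrable lborel F")
    case False
    then have "(\<integral>x. F x \<partial>lborel) = 0" by (rule not_integrable_integral_eq)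
    moreover have "0 \<le> (\<integral>x. h x \<partial>lborel)" by (rule integral_nonneg_AE) (simp add: hnn)
    ultimately show ?thesis using Bs_nn Hs_nn by simp
  next
    case True
    have hint: "integrable lborel h"
      by (rule Bochner_Integration.integrable_bound[OF G_integrable[OF eps] h_meas])
         (use h_upper hnn in \<open>auto simp: Gfun_def\<close>)
    define S where "S x = (\<integral>\<^sup>+y. ennreal (psi \<phi> K x y) \<partial>count_space \<eta>)" for x
    have Kd: "(\<lambda>x. K (dist x y)) \<in> borel_measurable lborel" for y :: 'a
      by (rule K_dist_meas) (rule K_mono)
    have psim: "(\<lambda>x. ennreal (psi \<phi> K x y)) \<in> borel_measurable lborel" for y
      unfolding psi_def using Kd[of y] phi_meas by measurable
    have Smeas: "S \<in> borel_measurable lborel"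
    proof -
      interpret sf: sigma_finite_measure "count_space \<eta>"
        by (rule sigma_finite_measure_count_space_countable[OF cnt])
      have "(\<lambda>p. ennreal (psi \<phi> K (snd p) (fst p))) \<in> borel_measurable (count_space \<eta> \<Otimes>\<^sub>M lborel)"
      proof (rule measurable_pair_measure_countable1[OF cnt])
        fix y assume "y \<in> \<eta>"
        show "(\<lambda>x. ennreal (psi \<phi> K (snd (y, x)) (fst (y, x)))) \<in> borel_measurable lborel"
          using psim[of y] by simp
      qed
      then have "(\<lambda>(x,y). ennreal (psi \<phi> K x y)) \<in> borel_measurable (lborel \<Otimes>\<^sub>M count_space \<eta>)"
        by (subst measurable_pair_swap_iff) (simp add: case_prod_beta)
      then show ?thesis unfolding S_def by (rule sf.borel_measurable_nn_integral)
    qed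
    have pw: "ennreal (F x) \<le> ennreal Bs * (ennreal (h x) + S x)" for x
    proof (cases "x \<in> \<eta>")
      case True
      then show ?thesis by (simp add: F_def insert_absorb)
    next
      case xn: False
      show ?thesis
      proof (cases "Bs = 0")
        case True
        then have "b x \<eta> = 0" using ble[OF GG, of x] b_nonneg[OF GG, of x] by simp
        then show ?thesis by (simp add: F_def)
      next
        case Bpos: False
        show ?thesis
        proof (cases "S x = \<infinity>")
          case True
          then show ?thesis using Bpos Bs_nn by (simp add: ennreal_mult_eq_top_iff)
        next
          case Sfin: False
          have Sfin': "S x < \<infinity>" using Sfin by (simp add: less_top[symmetric])
          have pnn: "\<And>y. y \<in> \<eta> \<Longrightarrow> 0 \<le> psi \<phi> K x y" by (rule psi_nn) (use xn in auto)
          have pxs: "(\<lambda>y. psi \<phi> K x y) summable_on \<eta>"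
            using nn_count_summable[of \<eta> "\<lambda>y. psi \<phi> K x y"] pnn Sfin' unfolding S_def by blast
          have Sx: "S x = ennreal (infsum (\<lambda>y. psi \<phi> K x y) \<eta>)"
            unfolding S_def by (rule nn_count_infsum[OF pnn pxs])
          have ps2: "(\<lambda>(x,y). psi \<phi> K x y) summable_on offdiag (insert x \<eta>)"
            by (rule psi_summable_insert[OF xn ps[unfolded f2_def] pxs])
          have hs2: "h summable_on insert x \<eta>" using hs by (simp add: summable_on_insert_iff)
          have "W (insert x \<eta>) = W \<eta> + h x + infsum (\<lambda>y. psi \<phi> K x y) \<eta>"
            using W_remove[OF hs2 ps2, of x] xn by (simp add: W_def)
          then have Fx: "F x = b x \<eta> * (h x + infsum (\<lambda>y. psi \<phi> K x y) \<eta>)"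
            by (simp add: F_def)
          have inn: "0 \<le> infsum (\<lambda>y. psi \<phi> K x y) \<eta>" by (rule infsum_nonneg) (rule pnn)
          have "F x \<le> Bs * (h x + infsum (\<lambda>y. psi \<phi> K x y) \<eta>)"
            unfolding Fx by (rule mult_right_mono[OF ble[OF GG]]) (use hnn[of x] inn in simp)
          then have "ennreal (F x) \<le> ennreal (Bs * (h x + infsum (\<lambda>y. psi \<phi> K x y) \<eta>))"
            by (rule ennreal_leI)
          also have "\<dots> = ennreal Bs * (ennreal (h x) + S x)"
            using Bs_nn hnn[of x] inn by (simp add: Sx ennreal_mult)
          finally show ?thesis .
        qed
      qed
    qed
    define c where "c = enn2real (C1 \<phi> K)"
    have C1c: "C1 \<phi> K = ennreal c" using C1_fin by (simp add: c_def)
    have c_nn: "0 \<le> c" by (simp add: c_def)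
    have inner: "ennreal Bs * (\<integral>\<^sup>+x. ennreal (psi \<phi> K x y) \<partial>lborel) \<le> ennreal (h y * (1/2))" for y
    proof -
      have "(\<integral>\<^sup>+x. ennreal (psi \<phi> K x y) \<partial>lborel) = (\<integral>\<^sup>+x. ennreal (\<phi> y) * ennreal (\<phi> x * K (dist y x)) \<partial>lborel)"
        by (rule nn_integral_cong) (simp add: psi_def ennreal_mult'[symmetric] less_imp_le[OF phi_pos] dist_commute mult_ac)
      also have "\<dots> = ennreal (\<phi> y) * (\<integral>\<^sup>+x. ennreal (\<phi> x * K (dist y x)) \<partial>lborel)"
      proof (rule nn_integral_cmult)
        have "(\<lambda>x. K (dist y x)) \<in> borel_measurable lborel"
          using Kd[of y] by (simp add: dist_commute)
        then show "(\<lambda>x. ennreal (\<phi> x * K (dist y x))) \<in> borel_measurable lborel"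
          using phi_meas by measurable
      qed
      finally have e: "(\<integral>\<^sup>+x. ennreal (psi \<phi> K x y) \<partial>lborel) = ennreal (\<phi> y) * (\<integral>\<^sup>+x. ennreal (\<phi> x * K (dist y x)) \<partial>lborel)" .
      have le: "(\<integral>\<^sup>+x. ennreal (\<phi> x * K (dist y x)) \<partial>lborel) \<le> ennreal c"
        unfolding C1c[symmetric] C1_def by (rule SUP_upper) simp
      have "(\<integral>\<^sup>+x. ennreal (psi \<phi> K x y) \<partial>lborel) \<le> ennreal (\<phi> y) * ennreal c"
        unfolding e by (rule mult_left_mono[OF le]) simp
      then have "ennreal Bs * (\<integral>\<^sup>+x. ennreal (psi \<phi> K x y) \<partial>lborel) \<le> ennreal Bs * (ennreal (\<phi> y) * ennreal c)"
        by (rule mult_left_mono) simp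
      also have "\<dots> = ennreal (Bs * \<phi> y * c)"
        using Bs_nn c_nn less_imp_le[OF phi_pos] by (simp add: ennreal_mult mult_ac)
      also have "\<dots> \<le> ennreal (h y * (1/2))"
        using h_lower[of y] by (intro ennreal_leI) (simp add: c_def Bs_def mult_ac)
      finally show ?thesis .
    qed
    have Sint: "ennreal Bs * (\<integral>\<^sup>+x. S x \<partial>lborel) \<le> ennreal (Hs * (1/2))"
    proof -
      have "(\<integral>\<^sup>+x. S x \<partial>lborel) = (\<integral>\<^sup>+y. (\<integral>\<^sup>+x. ennreal (psi \<phi> K x y) \<partial>lborel) \<partial>count_space \<eta>)"
        unfolding S_def by (rule nn_integral_count_space_nn_integral[OF cnt psim])
      then have "ennreal Bs * (\<integral>\<^sup>+x. S x \<partial>lborel) = (\<integral>\<^sup>+y. ennreal Bs * (\<integral>\<^sup>+x. ennreal (psi \<phi> K x y) \<partial>lborel) \<partial>count_space \<eta>)"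
        by (simp add: nn_integral_cmult)
      also have "\<dots> \<le> (\<integral>\<^sup>+y. ennreal (h y * (1/2)) \<partial>count_space \<eta>)"
        by (rule nn_integral_mono) (rule inner)
      also have "\<dots> = ennreal (infsum (\<lambda>y. h y * (1/2)) \<eta>)"
        by (rule nn_count_infsum) (simp add: hnn, rule summable_on_cmult_left[OF hs])
      also have "infsum (\<lambda>y. h y * (1/2)) \<eta> = Hs * (1/2)"
        unfolding Hs_def by (rule infsum_cmult_left) (rule hs)
      finally show ?thesis .
    qed
    have hI: "0 \<le> (\<integral>x. h x \<partial>lborel)" by (rule integral_nonneg_AE) (simp add: hnn)
    have hN: "(\<integral>\<^sup>+x. ennreal (h x) \<partial>lborel) = ennreal (\<integral>x. h x \<partial>lborel)"
      by (rule nn_integral_eq_integral[OF hint]) (simp add: hnn)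
    have "(\<integral>\<^sup>+x. ennreal (F x) \<partial>lborel) \<le> (\<integral>\<^sup>+x. ennreal Bs * (ennreal (h x) + S x) \<partial>lborel)"
      by (rule nn_integral_mono) (rule pw)
    also have "\<dots> = ennreal Bs * ((\<integral>\<^sup>+x. ennreal (h x) \<partial>lborel) + (\<integral>\<^sup>+x. S x \<partial>lborel))"
    proof -
      have hm: "(\<lambda>x. ennreal (h x)) \<in> borel_measurable lborel" using h_meas by measurable
      have hsm: "(\<lambda>x. ennreal (h x) + S x) \<in> borel_measurable lborel" using hm Smeas by measurable
      have "(\<integral>\<^sup>+x. ennreal (h x) + S x \<partial>lborel) = (\<integral>\<^sup>+x. ennreal (h x) \<partial>lborel) + (\<integral>\<^sup>+x. S x \<partial>lborel)"
        by (rule nn_integral_add[OF hm Smeas])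
      then show ?thesis by (simp add: nn_integral_cmult[OF hsm])
    qed
    also have "\<dots> = ennreal Bs * ennreal (\<integral>x. h x \<partial>lborel) + ennreal Bs * (\<integral>\<^sup>+x. S x \<partial>lborel)"
      by (simp add: hN distrib_left)
    also have "\<dots> \<le> ennreal (Bs * (\<integral>x. h x \<partial>lborel)) + ennreal (Hs * (1/2))"
      using Sint Bs_nn hI by (simp add: ennreal_mult add_left_mono)
    also have "\<dots> = ennreal (Bs * (\<integral>x. h x \<partial>lborel) + Hs / 2)"
      using Bs_nn Hs_nn hI by simp
    finally have NF: "(\<integral>\<^sup>+x. ennreal (F x) \<partial>lborel) \<le> ennreal (Bs * (\<integral>x. h x \<partial>lborel) + Hs / 2)" .
    have Fp: "integrable lborel (\<lambda>x. max 0 (F x))" using True by auto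
    have "(\<integral>x. F x \<partial>lborel) \<le> (\<integral>x. max 0 (F x) \<partial>lborel)"
      by (rule integral_mono[OF True Fp]) simp
    also have "\<dots> = enn2real (\<integral>\<^sup>+x. ennreal (max 0 (F x)) \<partial>lborel)"
      by (rule integral_eq_nn_integral) (use Fp in auto)
    also have "(\<integral>\<^sup>+x. ennreal (max 0 (F x)) \<partial>lborel) = (\<integral>\<^sup>+x. ennreal (F x) \<partial>lborel)"
      by (rule nn_integral_cong) (simp add: max_def ennreal_neg)
    also have "enn2real \<dots> \<le> enn2real (ennreal (Bs * (\<integral>x. h x \<partial>lborel) + Hs / 2))"
      by (rule enn2real_mono[OF NF]) simp
    also have "\<dots> = Bs * (\<integral>x. h x \<partial>lborel) + Hs / 2"
      using Bs_nn Hs_nn hI by (intro enn2real_ennreal) simp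
    finally show ?thesis .
  qed
  have "Lgen b W \<eta> = (\<Sum>\<^sub>\<infinity>x\<in>\<eta>. W (\<eta> - {x}) - W \<eta>) + (\<integral>x. F x \<partial>lborel)"
    by (simp add: Lgen_def F_def)
  also have "\<dots> \<le> - (Hs + 2 * V') + (Bs * (\<integral>x. h x \<partial>lborel) + Hs / 2)"
    using P1 P2 by simp
  also have "\<dots> \<le> Bs * (\<integral>x. h x \<partial>lborel) - 1/2 * W \<eta>"
    unfolding Weq using V_nn by (simp add: algebra_simps)
  finally show ?thesis by (simp add: W_def Bs_def)
qed


end
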